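(* Let $(G,P)$ be a quasi-lattice ordered group and $\mathcal D$ the diagonal subalgebra of $\mathcal T(G,P)$. Then the commutant $\mathcal D'$ of $\mathcal D$ in $B(\ell^2(P))$ is contained in $\ell^\infty(P)$, i.e. every $M\in\mathcal D'$ is a multiplication operator $M_g$ for some $g\in\ell^\infty(P)$.
   Context: Quasi-lattice ordered group $(G,P)$: $G$ discrete, $P\subseteq G$ subsemigroup, $P\cap P^{-1}=\{e\}$, and for $x\le y\iff x^{-1}y\in P$ elements with a common upper bound in $P$ have a least one in $P$. On $\ell^2(P)$ with basis $\{\varepsilon_t\}_{t\in P}$, $T_s\varepsilon_t=\varepsilon_{st}$; $\mathcal T(G,P)$ is generated by the $T_s$, and $\mathcal D=\overline{\mathrm{span}}\{T_sT_s^*:s\in P\}$. $\ell^\infty(P)$ acts on $\ell^2(P)$ by multiplication operators $M_g\varepsilon_t=g(t)\varepsilon_t$. *)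

theory Defs
  imports "HOL-Analysis.Analysis"
begin

text \<open>The group G is the (discrete) type 'a of class group_add, written additively:
  e = 0, st = s + t, s^{-1} = -s.  The order is x \<le> y iff -x + y \<in> P.\<close>

definition qlo_le :: "'a::group_add set \<Rightarrow> 'a \<Rightarrow> 'a \<Rightarrow> bool" where
  "qlo_le P x y \<longleftrightarrow> -x + y \<in> P"

definition quasi_lattice_ordered :: "'a::group_add set \<Rightarrow> bool" where
  "quasi_lattice_ordered P \<longleftrightarrow>
     (\<forall>s\<in>P. \<forall>t\<in>P. s + t \<in> P) \<and>
     P \<inter> uminus ` P = {0} \<and>
     (\<forall>x y. (\<exists>z\<in>P. qlo_le P x z \<and> qlo_le P y z) \<longrightarrow>
        (\<exists>z\<in>P. qlo_le P x z \<and> qlo_le P y z \<and>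
           (\<forall>w\<in>P. qlo_le P x w \<and> qlo_le P y w \<longrightarrow> qlo_le P z w)))"

definition l2 :: "'a set \<Rightarrow> ('a \<Rightarrow> complex) set" where
  "l2 P = {f. (\<forall>t. t \<notin> P \<longrightarrow> f t = 0) \<and> (\<lambda>t. (cmod (f t))\<^sup>2) summable_on P}"

definition l2norm :: "'a set \<Rightarrow> ('a \<Rightarrow> complex) \<Rightarrow> real" where
  "l2norm P f = sqrt (infsum (\<lambda>t. (cmod (f t))\<^sup>2) P)"

text \<open>Bounded linear operators on \<ell>^2(P) (only their values on \<ell>^2(P) matter).\<close>
definition bounded_op :: "'a set \<Rightarrow> (('a \<Rightarrow> complex) \<Rightarrow> ('a \<Rightarrow> complex)) \<Rightarrow> bool" where
  "bounded_op P A \<longleftrightarrow>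
     (\<forall>f\<in>l2 P. A f \<in> l2 P) \<and>
     (\<forall>f\<in>l2 P. \<forall>g\<in>l2 P. \<forall>a b. A (\<lambda>t. a * f t + b * g t) = (\<lambda>t. a * A f t + b * A g t)) \<and>
     (\<exists>C. \<forall>f\<in>l2 P. l2norm P (A f) \<le> C * l2norm P f)"

definition op_norm :: "'a set \<Rightarrow> (('a \<Rightarrow> complex) \<Rightarrow> ('a \<Rightarrow> complex)) \<Rightarrow> real" where
  "op_norm P A = Sup {l2norm P (A f) | f. f \<in> l2 P \<and> l2norm P f \<le> 1}"

text \<open>Isometries T_s: T_s \<epsilon>_t = \<epsilon>_{st}, and their adjoints (T_s^* \<epsilon>_u = \<epsilon>_{s^{-1}u}
  if s^{-1}u \<in> P, else 0).\<close>
definition T_op :: "'a::group_add set \<Rightarrow> 'a \<Rightarrow> ('a \<Rightarrow> complex) \<Rightarrow> ('a \<Rightarrow> complex)" where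
  "T_op P s f = (\<lambda>t. if t \<in> P \<and> -s + t \<in> P then f (-s + t) else 0)"

definition T_adj :: "'a::group_add set \<Rightarrow> 'a \<Rightarrow> ('a \<Rightarrow> complex) \<Rightarrow> ('a \<Rightarrow> complex)" where
  "T_adj P s f = (\<lambda>t. if t \<in> P then f (s + t) else 0)"

text \<open>The diagonal algebra: norm closure of span of T_s T_s^*, s \<in> P.\<close>
definition diag_alg :: "'a::group_add set \<Rightarrow> (('a \<Rightarrow> complex) \<Rightarrow> ('a \<Rightarrow> complex)) set" where
  "diag_alg P = {A. bounded_op P A \<and>
     (\<forall>\<epsilon>>0. \<exists>F c. finite F \<and> F \<subseteq> P \<and>
        op_norm P (\<lambda>f t. A f t - (\<Sum>s\<in>F. c s * (T_op P s (T_adj P s f)) t)) < \<epsilon>)}"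

definition commutant :: "'a set \<Rightarrow> (('a \<Rightarrow> complex) \<Rightarrow> ('a \<Rightarrow> complex)) set
    \<Rightarrow> (('a \<Rightarrow> complex) \<Rightarrow> ('a \<Rightarrow> complex)) set" where
  "commutant P S = {M. bounded_op P M \<and> (\<forall>A\<in>S. \<forall>f\<in>l2 P. M (A f) = A (M f))}"

definition mult_op :: "('a \<Rightarrow> complex) \<Rightarrow> ('a \<Rightarrow> complex) \<Rightarrow> ('a \<Rightarrow> complex)" where
  "mult_op g f = (\<lambda>t. g t * f t)"

end

theory Submission
  imports Defs
begin

definition restr :: "'a set \<Rightarrow> ('a \<Rightarrow> complex) \<Rightarrow> 'a \<Rightarrow> complex" where
  "restr F f = (\<lambda>t. if t \<in> F then f t else 0)"

definition dlt :: "'a \<Rightarrow> 'a \<Rightarrow> complex" where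
  "dlt v = (\<lambda>t. if t = v then 1 else 0)"

lemma coord_le:
  assumes "f \<in> l2 P" "u \<in> P"
  shows "cmod (f u) \<le> l2norm P f"
proof -
  have s: "(\<lambda>t. (cmod (f t))\<^sup>2) summable_on P" using assms(1) by (simp add: l2_def)
  have "(cmod (f u))\<^sup>2 = infsum (\<lambda>t. (cmod (f t))\<^sup>2) {u}" by simp
  also have "\<dots> \<le> infsum (\<lambda>t. (cmod (f t))\<^sup>2) P"
    by (rule infsum_mono2) (use s assms(2) in auto)
  finally show ?thesis unfolding l2norm_def by (simp add: real_le_rsqrt)
qed

lemma finsupp_l2:
  assumes "finite F" "F \<subseteq> P" "\<And>t. t \<notin> F \<Longrightarrow> h t = 0"
  shows "h \<in> l2 P"
proof -
  have "(\<lambda>t. (cmod (h t))\<^sup>2) summable_on P \<longleftrightarrow> (\<lambda>t. (cmod (h t))\<^sup>2) summable_on F"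
    by (rule summable_on_cong_neutral) (use assms in auto)
  then show ?thesis using assms unfolding l2_def by auto
qed

lemma dlt_l2: "v \<in> P \<Longrightarrow> dlt v \<in> l2 P"
  by (rule finsupp_l2[of "{v}"]) (auto simp: dlt_def)

lemma dlt_norm: "v \<in> P \<Longrightarrow> l2norm P (dlt v) = 1"
proof -
  assume v: "v \<in> P"
  have "infsum (\<lambda>t. (cmod (dlt v t))\<^sup>2) P = infsum (\<lambda>t. (cmod (dlt v t))\<^sup>2) {v}"
    by (rule infsum_cong_neutral) (use v in \<open>auto simp: dlt_def\<close>)
  also have "\<dots> = 1" by (simp add: dlt_def)
  finally show ?thesis by (simp add: l2norm_def)
qed

lemma tail_small:
  fixes h :: "'a \<Rightarrow> real"
  assumes s: "h summable_on P" and e: "e > 0"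
  shows "\<exists>X. finite X \<and> X \<subseteq> P \<and> (\<forall>Y. finite Y \<and> X \<subseteq> Y \<and> Y \<subseteq> P \<longrightarrow> infsum h (P - Y) < e)"
proof -
  have "(sum h \<longlongrightarrow> infsum h P) (finite_subsets_at_top P)"
    using has_sum_infsum[OF s] by (simp add: has_sum_def)
  then have "eventually (\<lambda>Y. dist (sum h Y) (infsum h P) < e) (finite_subsets_at_top P)"
    using e tendsto_iff by blast
  then obtain X where X: "finite X" "X \<subseteq> P"
    "\<And>Y. finite Y \<and> X \<subseteq> Y \<and> Y \<subseteq> P \<Longrightarrow> dist (sum h Y) (infsum h P) < e"
    unfolding eventually_finite_subsets_at_top by blast
  have "infsum h (P - Y) < e" if "finite Y" "X \<subseteq> Y" "Y \<subseteq> P" for Y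
  proof -
    have "infsum h (P - Y) = infsum h P - infsum h Y"
      by (rule infsum_Diff) (use s that in auto)
    then show ?thesis using X(3)[of Y] that by (simp add: dist_real_def)
  qed
  then show ?thesis using X by blast
qed

lemma zero_l2: "(\<lambda>t. 0) \<in> l2 P"
  by (rule finsupp_l2[of "{}"]) auto

lemma cutoff_l2:
  assumes "f \<in> l2 P" "\<And>t. cmod (h t) \<le> cmod (f t)" "\<And>t. t \<notin> P \<Longrightarrow> h t = 0"
  shows "h \<in> l2 P" "l2norm P h \<le> l2norm P f"
proof -
  have s: "(\<lambda>t. (cmod (f t))\<^sup>2) summable_on P" using assms(1) by (simp add: l2_def)
  have le: "(cmod (h t))\<^sup>2 \<le> (cmod (f t))\<^sup>2" for t
    using assms(2)[of t] by (simp add: power_mono)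
  have s2: "(\<lambda>t. (cmod (h t))\<^sup>2) summable_on P"
    by (rule summable_on_comparison_test[OF s]) (use le in auto)
  then show "h \<in> l2 P" using assms(3) by (simp add: l2_def)
  have "infsum (\<lambda>t. (cmod (h t))\<^sup>2) P \<le> infsum (\<lambda>t. (cmod (f t))\<^sup>2) P"
    by (rule infsum_mono[OF s2 s]) (use le in auto)
  then show "l2norm P h \<le> l2norm P f" by (simp add: l2norm_def)
qed

theorem lemma6p11:
  fixes P :: "'a::group_add set"
  assumes "quasi_lattice_ordered P"
      and "M \<in> commutant P (diag_alg P)"
  shows "\<exists>g. (\<exists>C. \<forall>t\<in>P. cmod (g t) \<le> C) \<and> (\<forall>f\<in>l2 P. M f = mult_op g f)"
proof -
  have PP: "P \<inter> uminus ` P = {0}" using assms(1) by (simp add: quasi_lattice_ordered_def)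
  have zP: "0 \<in> P" using PP by blast
  have antis: "a = 0" if "a \<in> P" "-a \<in> P" for a
  proof -
    have "a \<in> uminus ` P" using that(2) by (metis image_eqI minus_minus)
    then show ?thesis using PP that(1) by blast
  qed
  have Mb: "bounded_op P M" and comm: "\<And>A f. A \<in> diag_alg P \<Longrightarrow> f \<in> l2 P \<Longrightarrow> M (A f) = A (M f)"
    using assms(2) by (auto simp: commutant_def)
  have Mmap: "\<And>f. f \<in> l2 P \<Longrightarrow> M f \<in> l2 P" using Mb by (simp add: bounded_op_def)
  have Mlin: "\<And>f h a b. f \<in> l2 P \<Longrightarrow> h \<in> l2 P \<Longrightarrow>
      M (\<lambda>t. a * f t + b * h t) = (\<lambda>t. a * M f t + b * M h t)"
    using Mb by (simp add: bounded_op_def)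
  obtain C where MC: "\<And>f. f \<in> l2 P \<Longrightarrow> l2norm P (M f) \<le> C * l2norm P f"
    using Mb unfolding bounded_op_def by blast
  have l2z: "\<And>f t. f \<in> l2 P \<Longrightarrow> t \<notin> P \<Longrightarrow> f t = 0" by (simp add: l2_def)
  have M0: "M (\<lambda>t. 0) = (\<lambda>t. 0)"
    using Mlin[OF zero_l2 zero_l2, of 0 0] by simp
  define E where "E s = (\<lambda>f t. if t \<in> P \<and> -s + t \<in> P then f t else (0::complex))" for s
  have E_T: "E s = (\<lambda>f. T_op P s (T_adj P s f))" for s
    by (auto simp: E_def T_op_def T_adj_def fun_eq_iff add.assoc[symmetric])
  have opn0: "op_norm P (\<lambda>f t. 0) = 0"
  proof -
    have "{l2norm P ((\<lambda>f t. 0::complex) f) | f. f \<in> l2 P \<and> l2norm P f \<le> 1} = {0}"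
      using zero_l2[of P] by (auto simp: l2norm_def)
    then show ?thesis by (simp add: op_norm_def)
  qed
  have Ediag: "E s \<in> diag_alg P" if sP: "s \<in> P" for s
  proof -
    have "bounded_op P (E s)"
      unfolding bounded_op_def
    proof (intro conjI ballI allI)
      fix f assume "f \<in> l2 P"
      then show "E s f \<in> l2 P" by (rule cutoff_l2(1)) (auto simp: E_def)
    next
      fix f h a b
      show "E s (\<lambda>t. a * f t + b * h t) = (\<lambda>t. a * E s f t + b * E s h t)"
        by (auto simp: E_def)
    next
      show "\<exists>C. \<forall>f\<in>l2 P. l2norm P (E s f) \<le> C * l2norm P f"
        by (rule exI[of _ 1]) (auto intro!: cutoff_l2(2) simp: E_def)
    qed
    moreover have "\<exists>F c. finite F \<and> F \<subseteq> P \<and>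
        op_norm P (\<lambda>f t. E s f t - (\<Sum>s\<in>F. c s * (T_op P s (T_adj P s f)) t)) < e" if "e > 0" for e
      by (rule exI[of _ "{s}"], rule exI[of _ "\<lambda>_. 1"]) (use sP that opn0 in \<open>simp add: E_T\<close>)
    ultimately show ?thesis by (simp add: diag_alg_def)
  qed
  have commE: "M (E s f) = E s (M f)" if "s \<in> P" "f \<in> l2 P" for s f
    using comm[OF Ediag[OF that(1)] that(2)] .
  define g where "g t = M (dlt t) t" for t
  have Md: "M (dlt v) = (\<lambda>u. g v * dlt v u)" if vP: "v \<in> P" for v
  proof
    fix u
    show "M (dlt v) u = g v * dlt v u"
    proof (cases "u = v")
      case True then show ?thesis by (simp add: g_def dlt_def)
    next
      case uv: False
      have "M (dlt v) u = 0"
      proof (cases "u \<in> P")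
        case False then show ?thesis using l2z[OF Mmap[OF dlt_l2[OF vP]]] by blast
      next
        case uP: True
        show ?thesis
        proof (cases "-v + u \<in> P")
          case False
          have "E v (dlt v) = dlt v" using vP zP by (auto simp: E_def dlt_def fun_eq_iff)
          then have "M (dlt v) = E v (M (dlt v))" using commE[OF vP dlt_l2[OF vP]] by simp
          then show ?thesis using False by (metis E_def)
        next
          case True
          have "-u + v \<notin> P"
          proof
            assume "-u + v \<in> P"
            moreover have "- (-v + u) = -u + v" by (simp add: minus_add)
            ultimately have "-v + u = 0" using antis True by metis
            then show False using uv by (metis add_minus_cancel add.right_neutral)
          qed
          then have "E u (dlt v) = (\<lambda>t. 0)" by (auto simp: E_def dlt_def fun_eq_iff)
          then have "E u (M (dlt v)) = (\<lambda>t. 0)" using commE[OF uP dlt_l2[OF vP]] M0 by simp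
          then have "E u (M (dlt v)) u = 0" by simp
          then show ?thesis using uP zP by (simp add: E_def)
        qed
      qed
      then show ?thesis using uv by (simp add: dlt_def)
    qed
  qed
  have gbound: "cmod (g t) \<le> C" if "t \<in> P" for t
  proof -
    have "cmod (g t) \<le> l2norm P (M (dlt t))"
      unfolding g_def by (rule coord_le[OF Mmap[OF dlt_l2[OF that]] that])
    also have "\<dots> \<le> C" using MC[OF dlt_l2[OF that]] dlt_norm[OF that] by simp
    finally show ?thesis .
  qed
  have restr_l2: "finite F \<Longrightarrow> F \<subseteq> P \<Longrightarrow> restr F f \<in> l2 P" for F f
    by (rule finsupp_l2[of F]) (auto simp: restr_def)
  have Mfin: "F \<subseteq> P \<Longrightarrow> M (restr F f) = mult_op g (restr F f)" if "finite F" for F f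
    using that
  proof (induction F rule: finite_induct)
    case empty
    have "restr {} f = (\<lambda>t. 0)" by (simp add: restr_def)
    then show ?case using M0 by (simp add: mult_op_def)
  next
    case (insert v F)
    have vP: "v \<in> P" and FP: "F \<subseteq> P" using insert.prems by auto
    have eq: "restr (insert v F) f = (\<lambda>t. 1 * restr F f t + f v * dlt v t)"
      using insert.hyps by (auto simp: restr_def dlt_def fun_eq_iff)
    have "M (restr (insert v F) f) = (\<lambda>t. 1 * M (restr F f) t + f v * M (dlt v) t)"
      unfolding eq by (rule Mlin[OF restr_l2[OF insert.hyps(1) FP] dlt_l2[OF vP]])
    then show ?case unfolding insert.IH[OF FP] Md[OF vP]
      using insert.hyps by (auto simp: mult_op_def restr_def dlt_def fun_eq_iff)
  qed
  have main: "M f = mult_op g f" if fl: "f \<in> l2 P" for f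
  proof
    fix u
    show "M f u = mult_op g f u"
    proof (cases "u \<in> P")
      case False then show ?thesis using l2z[OF Mmap[OF fl] False] l2z[OF fl False]
        by (simp add: mult_op_def)
    next
      case uP: True
      have s: "(\<lambda>t. (cmod (f t))\<^sup>2) summable_on P" using fl by (simp add: l2_def)
      have "cmod (M f u - g u * f u) < e" if e: "e > 0" for e
      proof -
        define K where "K = \<bar>C\<bar> + 1"
        have K: "K > 0" by (simp add: K_def)
        obtain X where X: "finite X" "X \<subseteq> P"
          "\<And>Y. finite Y \<and> X \<subseteq> Y \<and> Y \<subseteq> P \<Longrightarrow> infsum (\<lambda>t. (cmod (f t))\<^sup>2) (P - Y) < (e / K)\<^sup>2"
          using tail_small[OF s, of "(e/K)\<^sup>2"] e K by auto
        define Y where "Y = insert u X"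
        have Y: "finite Y" "X \<subseteq> Y" "Y \<subseteq> P" "u \<in> Y" using X uP by (auto simp: Y_def)
        define d where "d = (\<lambda>t. 1 * f t + (-1) * restr Y f t)"
        have dl: "d \<in> l2 P"
          by (rule cutoff_l2(1)[OF fl]) (auto simp: d_def restr_def l2z[OF fl])
        have "infsum (\<lambda>t. (cmod (d t))\<^sup>2) P = infsum (\<lambda>t. (cmod (f t))\<^sup>2) (P - Y)"
          by (rule infsum_cong_neutral) (auto simp: d_def restr_def)
        then have dn: "l2norm P d < e / K"
          using X(3)[of Y] Y e K unfolding l2norm_def
          by (metis real_sqrt_less_mono real_sqrt_abs abs_of_pos divide_pos_pos)
        have dn0: "l2norm P d \<ge> 0" unfolding l2norm_def
          by (simp add: infsum_nonneg)
        have Mdd: "M d = (\<lambda>t. 1 * M f t + (-1) * M (restr Y f) t)"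
          unfolding d_def by (rule Mlin[OF fl restr_l2[OF Y(1) Y(3)]])
        have "M (restr Y f) u = g u * f u"
          using Mfin[OF Y(1) Y(3)] Y(4) by (simp add: mult_op_def restr_def)
        then have "cmod (M f u - g u * f u) = cmod (M d u)" by (simp add: Mdd)
        also have "\<dots> \<le> l2norm P (M d)" by (rule coord_le[OF Mmap[OF dl] uP])
        also have "\<dots> \<le> C * l2norm P d" by (rule MC[OF dl])
        also have "\<dots> \<le> K * l2norm P d" using dn0 unfolding K_def
          by (intro mult_right_mono) auto
        also have "\<dots> < K * (e / K)" using dn K by (intro mult_strict_left_mono)
        also have "\<dots> = e" using K by simp
        finally show ?thesis .
      qed
      then have "M f u - g u * f u = 0"
        by (metis norm_le_zero_iff not_less order_refl zero_less_norm_iff)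
      then show ?thesis by (simp add: mult_op_def)
    qed
  qed
  show ?thesis using gbound main by blast
qed

end
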